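(* Let $\mathcal S$ be one of the step sets $\mathcal B,\mathcal C,\mathcal D,\mathcal E$. For any $k\ge1$ and any $Q_k\in S_k$, the generating function $\sum_{n\ge0}\#_{\mathcal S}\{(0,0)\xrightarrow{n}Q_k\}t^n$ is a rational function of $t$, whose first pole (i.e., pole of smallest modulus) is at $t=\big(2\cos(\tfrac{\pi}{2+k})\big)^{-1}$.
   Context: Let $\mathbb N=\{0,1,2,\dots\}$. For a step set $\mathcal S\subset\{-1,0,1\}^2$, a quarter-plane walk of length $n$ is a sequence $p_0=(0,0),p_1,\dots,p_n$ of points of $\mathbb N^2$ with $p_m-p_{m-1}\in\mathcal S$ for all $m$; $\#_{\mathcal S}\{(0,0)\xrightarrow{n}(i,j)\}$ is the number of such walks ending at $(i,j)$. The step sets are $\mathcal B=\{(-1,1),(0,1),(1,0),(1,-1)\}$, $\mathcal C=\{(-1,1),(0,1),(1,1),(1,0),(1,-1)\}$, $\mathcal D=\{(-1,1),(0,1),(1,-1)\}$, $\mathcal E=\{(-1,1),(0,1),(1,1),(1,-1)\}$. For $k\ge0$, $S_k=\{(k-i,i):0\le i\le k\}$. *)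

theory Defs
  imports Complex_Main "HOL-Computational_Algebra.Computational_Algebra"
begin

definition quarter_plane :: "(int \<times> int) set" where
  "quarter_plane = {(i, j). 0 \<le> i \<and> 0 \<le> j}"

definition stepB :: "(int \<times> int) set" where
  "stepB = {(-1, 1), (0, 1), (1, 0), (1, -1)}"
definition stepC :: "(int \<times> int) set" where
  "stepC = {(-1, 1), (0, 1), (1, 1), (1, 0), (1, -1)}"
definition stepD :: "(int \<times> int) set" where
  "stepD = {(-1, 1), (0, 1), (1, -1)}"
definition stepE :: "(int \<times> int) set" where
  "stepE = {(-1, 1), (0, 1), (1, 1), (1, -1)}"

text \<open>Quarter-plane walks of length n with steps in S, from (0,0) to P,
  represented as the list of visited points p_0, ..., p_n.\<close>
definition qp_walks :: "(int \<times> int) set \<Rightarrow> nat \<Rightarrow> int \<times> int \<Rightarrow> (int \<times> int) list set" where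
  "qp_walks S n P = {ps. length ps = n + 1 \<and> ps ! 0 = (0, 0) \<and> ps ! n = P \<and>
      (\<forall>m\<le>n. ps ! m \<in> quarter_plane) \<and>
      (\<forall>m. 1 \<le> m \<and> m \<le> n \<longrightarrow> (fst (ps ! m) - fst (ps ! (m - 1)), snd (ps ! m) - snd (ps ! (m - 1))) \<in> S)}"

definition num_walks :: "(int \<times> int) set \<Rightarrow> nat \<Rightarrow> int \<times> int \<Rightarrow> nat" where
  "num_walks S n P = card (qp_walks S n P)"

definition walk_gf :: "(int \<times> int) set \<Rightarrow> int \<times> int \<Rightarrow> complex fps" where
  "walk_gf S P = Abs_fps (\<lambda>n. of_nat (num_walks S n P))"

definition antidiag :: "nat \<Rightarrow> (int \<times> int) set" where
  "antidiag k = {(int k - int i, int i) | i. i \<le> k}"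

end

theory Submission
  imports Defs "HOL-Analysis.Analysis" "HOL-Library.Function_Algebras" "HOL-Computational_Algebra.Field_as_Ring"
begin


definition psub :: "int \<times> int \<Rightarrow> int \<times> int \<Rightarrow> int \<times> int" where
  "psub P s = (fst P - fst s, snd P - snd s)"

lemma qp_walks_0: "qp_walks S 0 P = (if P = (0,0) then {[P]} else {})"
proof -
  have "ps \<in> qp_walks S 0 P \<longleftrightarrow> P = (0,0) \<and> ps = [P]" for ps
  proof
    assume "ps \<in> qp_walks S 0 P"
    then show "P = (0,0) \<and> ps = [P]" unfolding qp_walks_def
      by (cases ps) auto
  next
    assume "P = (0,0) \<and> ps = [P]"
    then show "ps \<in> qp_walks S 0 P" unfolding qp_walks_def quarter_plane_def by auto
  qed
  then show ?thesis by auto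
qed

lemma num_walks_0: "num_walks S 0 P = (if P = (0,0) then 1 else 0)"
  by (simp add: num_walks_def qp_walks_0)

lemma qp_walks_notq: "P \<notin> quarter_plane \<Longrightarrow> qp_walks S n P = {}"
  unfolding qp_walks_def by auto

lemma qp_walks_Suc:
  assumes "P \<in> quarter_plane"
  shows "qp_walks S (Suc n) P = (\<Union>s\<in>S. (\<lambda>ps. ps @ [P]) ` qp_walks S n (psub P s))"
proof (intro equalityI subsetI)
  fix ps assume ps: "ps \<in> qp_walks S (Suc n) P"
  define ps' where "ps' = take (Suc n) ps"
  define s where "s = psub P (ps ! n)"
  have len: "length ps = Suc (Suc n)" using ps unfolding qp_walks_def by auto
  have last: "ps ! Suc n = P" using ps unfolding qp_walks_def by auto
  have eq: "ps = ps' @ [P]"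
    unfolding ps'_def using len last
    by (metis take_Suc_conv_app_nth lessI take_all order_refl)
  have sS: "s \<in> S"
    using ps unfolding qp_walks_def s_def psub_def by (auto simp: last)
  have n1: "ps' ! n = ps ! n" unfolding ps'_def by simp
  have "ps' \<in> qp_walks S n (psub P s)"
    unfolding qp_walks_def
  proof (intro CollectI conjI allI impI)
    show "length ps' = n + 1" using len unfolding ps'_def by simp
    show "ps' ! 0 = (0,0)" using ps unfolding ps'_def qp_walks_def by auto
    show "ps' ! n = psub P s" unfolding s_def psub_def n1 by simp
    fix m
    show "m \<le> n \<Longrightarrow> ps' ! m \<in> quarter_plane"
      using ps unfolding ps'_def qp_walks_def by auto
    assume "1 \<le> m \<and> m \<le> n"
    then show "(fst (ps' ! m) - fst (ps' ! (m - 1)), snd (ps' ! m) - snd (ps' ! (m - 1))) \<in> S"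
      using ps unfolding ps'_def qp_walks_def by auto
  qed
  then show "ps \<in> (\<Union>s\<in>S. (\<lambda>ps. ps @ [P]) ` qp_walks S n (psub P s))"
    using sS eq by blast
next
  fix ps assume "ps \<in> (\<Union>s\<in>S. (\<lambda>ps. ps @ [P]) ` qp_walks S n (psub P s))"
  then obtain s ps' where sS: "s \<in> S" and ps': "ps' \<in> qp_walks S n (psub P s)"
    and eq: "ps = ps' @ [P]" by blast
  have len: "length ps' = Suc n" using ps' unfolding qp_walks_def by auto
  have nth1: "m \<le> n \<Longrightarrow> ps ! m = ps' ! m" for m using len eq by (simp add: nth_append)
  have nth2: "ps ! Suc n = P" using len eq by (simp add: nth_append)
  show "ps \<in> qp_walks S (Suc n) P"
    unfolding qp_walks_def
  proof (intro CollectI conjI allI impI)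
    show "length ps = Suc n + 1" using len eq by simp
    show "ps ! 0 = (0,0)" using nth1[of 0] ps' unfolding qp_walks_def by auto
    show "ps ! Suc n = P" by (rule nth2)
    fix m
    show "m \<le> Suc n \<Longrightarrow> ps ! m \<in> quarter_plane"
      using ps' assms nth1 nth2 unfolding qp_walks_def by (cases "m = Suc n") auto
    assume m: "1 \<le> m \<and> m \<le> Suc n"
    show "(fst (ps ! m) - fst (ps ! (m - 1)), snd (ps ! m) - snd (ps ! (m - 1))) \<in> S"
    proof (cases "m = Suc n")
      case True
      have "ps ! (m - 1) = psub P s" using nth1[of n] ps' True unfolding qp_walks_def by auto
      then show ?thesis using True nth2 sS by (simp add: psub_def)
    next
      case False
      then have "m \<le> n" "m - 1 \<le> n" using m by auto
      then show ?thesis using ps' m nth1 unfolding qp_walks_def by auto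
    qed
  qed
qed

lemma finite_qp_walks: "finite S \<Longrightarrow> finite (qp_walks S n P)"
proof (induction n arbitrary: P)
  case 0 then show ?case by (simp add: qp_walks_0)
next
  case (Suc n)
  then show ?case
    by (cases "P \<in> quarter_plane") (auto simp: qp_walks_Suc qp_walks_notq)
qed

lemma num_walks_notq: "P \<notin> quarter_plane \<Longrightarrow> num_walks S n P = 0"
  by (simp add: num_walks_def qp_walks_notq)

lemma num_walks_Suc:
  assumes "finite S"
  shows "num_walks S (Suc n) P =
    (if P \<in> quarter_plane then (\<Sum>s\<in>S. num_walks S n (psub P s)) else 0)"
proof (cases "P \<in> quarter_plane")
  case True
  have "card (\<Union>s\<in>S. (\<lambda>ps. ps @ [P]) ` qp_walks S n (psub P s)) =
        (\<Sum>s\<in>S. card ((\<lambda>ps. ps @ [P]) ` qp_walks S n (psub P s)))"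
  proof (rule card_UN_disjoint)
    show "finite S" by fact
    show "\<forall>i\<in>S. finite ((\<lambda>ps. ps @ [P]) ` qp_walks S n (psub P i))"
      using finite_qp_walks[OF assms] by auto
    show "\<forall>i\<in>S. \<forall>j\<in>S. i \<noteq> j \<longrightarrow> (\<lambda>ps. ps @ [P]) ` qp_walks S n (psub P i) \<inter>
        (\<lambda>ps. ps @ [P]) ` qp_walks S n (psub P j) = {}"
    proof (intro ballI impI)
      fix i j assume "i \<in> S" "j \<in> S" "i \<noteq> j"
      show "(\<lambda>ps. ps @ [P]) ` qp_walks S n (psub P i) \<inter> (\<lambda>ps. ps @ [P]) ` qp_walks S n (psub P j) = {}"
      proof (rule ccontr)
        assume "\<not> ?thesis"
        then obtain a b where a: "a \<in> qp_walks S n (psub P i)" and b: "b \<in> qp_walks S n (psub P j)"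
          and ab: "a @ [P] = b @ [P]" by blast
        then have "a = b" by simp
        then have "psub P i = psub P j" using a b unfolding qp_walks_def by auto
        then show False using \<open>i \<noteq> j\<close> by (auto simp: psub_def prod_eq_iff)
      qed
    qed
  qed
  also have "\<dots> = (\<Sum>s\<in>S. num_walks S n (psub P s))"
    unfolding num_walks_def by (intro sum.cong refl card_image) (auto intro: inj_onI)
  finally show ?thesis using True by (simp add: num_walks_def qp_walks_Suc)
qed (simp add: num_walks_notq)



lemma sum_fun_at: "(\<Sum>x\<in>A. f x) y = (\<Sum>x\<in>A. f x y)"
  by (induction A rule: infinite_finite_induct) auto

interpretation fvs: vector_space "\<lambda>(c::real) (f::'a \<Rightarrow> real). (\<lambda>x. c * f x)"
  by unfold_locales (auto simp: fun_eq_iff algebra_simps)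

lemma finite_dependence:
  fixes w :: "nat \<Rightarrow> 'a \<Rightarrow> real" and T :: "'a set"
  assumes T: "finite T" and m: "card T < Suc m"
  shows "\<exists>c. (\<exists>i\<le>m. c i \<noteq> 0) \<and> (\<forall>P\<in>T. (\<Sum>i\<le>m. c i * w i P) = 0)"
proof -
  define w' where "w' i = (\<lambda>P. if P \<in> T then w i P else 0)" for i
  define \<delta> where "\<delta> P = (\<lambda>x. if x = P then (1::real) else 0)" for P :: 'a
  show ?thesis
  proof (cases "inj_on w' {..m}")
    case False
    then obtain i j where ij: "i \<le> m" "j \<le> m" "i \<noteq> j" "w' i = w' j"
      unfolding inj_on_def by auto
    define c where "c l = (if l = i then 1 else if l = j then -1 else (0::real))" for l
    have "(\<Sum>l\<le>m. c l * w l P) = 0" if P: "P \<in> T" for P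
    proof -
      have "(\<Sum>l\<le>m. c l * w l P) = (\<Sum>l\<in>{i,j}. c l * w l P)"
        by (rule sum.mono_neutral_right) (use ij in \<open>auto simp: c_def\<close>)
      also have "\<dots> = w i P - w j P" using ij by (simp add: c_def)
      also have "\<dots> = 0" using ij(4) P unfolding w'_def by (metis diff_self)
      finally show ?thesis .
    qed
    moreover have "c i \<noteq> 0" by (simp add: c_def)
    ultimately show ?thesis using ij by blast
  next
    case True
    have sp: "w' ` {..m} \<subseteq> fvs.span (\<delta> ` T)"
    proof
      fix v assume "v \<in> w' ` {..m}"
      then obtain i where v: "v = w' i" by auto
      have "v = (\<Sum>P\<in>T. (\<lambda>x. w i P * \<delta> P x))"
        unfolding v w'_def \<delta>_def
        by (auto simp: fun_eq_iff sum_fun_at T if_distrib cong: if_cong)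
      also have "\<dots> \<in> fvs.span (\<delta> ` T)"
        by (intro fvs.span_sum fvs.span_scale[unfolded] fvs.span_base) auto
      finally show "v \<in> fvs.span (\<delta> ` T)" .
    qed
    have cw: "card (w' ` {..m}) = Suc m" using True by (simp add: card_image)
    have "\<not> fvs.independent (w' ` {..m})"
    proof
      assume "fvs.independent (w' ` {..m})"
      from fvs.independent_span_bound[OF _ this sp] T
      have "card (w' ` {..m}) \<le> card (\<delta> ` T)" by auto
      also have "\<dots> \<le> card T" using T by (rule card_image_le)
      finally show False using cw m by simp
    qed
    then obtain t u where t: "finite t" "t \<subseteq> w' ` {..m}"
      and tz: "(\<Sum>v\<in>t. (\<lambda>x. u v * v x)) = 0" and tnz: "\<exists>v\<in>t. u v \<noteq> 0"
      unfolding fvs.dependent_explicit by blast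
    define c where "c l = (if w' l \<in> t then u (w' l) else 0)" for l
    have "(\<Sum>l\<le>m. c l * w l P) = 0" if P: "P \<in> T" for P
    proof -
      have "(\<Sum>l\<le>m. c l * w l P) = (\<Sum>l\<le>m. c l * w' l P)"
        using P by (simp add: w'_def)
      also have "\<dots> = (\<Sum>l\<in>{l\<in>{..m}. w' l \<in> t}. u (w' l) * w' l P)"
        by (rule sum.mono_neutral_cong_right) (auto simp: c_def)
      also have "\<dots> = (\<Sum>v\<in>w' ` {l\<in>{..m}. w' l \<in> t}. u v * v P)"
        by (rule sum.reindex[symmetric, unfolded comp_def]) (rule inj_on_subset[OF True], auto)
      also have "w' ` {l\<in>{..m}. w' l \<in> t} = t" using t(2) by auto
      also have "(\<Sum>v\<in>t. u v * v P) = (\<Sum>v\<in>t. (\<lambda>x. u v * v x)) P" by (simp add: sum_fun_at)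
      also have "\<dots> = 0" using tz by simp
      finally show ?thesis .
    qed
    moreover from tnz t(2) obtain l where "l \<le> m" "c l \<noteq> 0" unfolding c_def by auto
    ultimately show ?thesis by blast
  qed
qed



definition tri :: "int \<Rightarrow> (int \<times> int) set" where
  "tri K = {P. P \<in> quarter_plane \<and> fst P + snd P \<le> K}"

lemma finite_tri: "finite (tri K)"
proof -
  have "tri K \<subseteq> {0..K} \<times> {0..K}" unfolding tri_def quarter_plane_def by auto
  then show ?thesis by (rule finite_subset) auto
qed

lemma rec_vanish:
  fixes c :: "nat \<Rightarrow> real"
  assumes S: "finite S" "\<forall>s\<in>S. fst s + snd s \<ge> 0"
    and z: "\<forall>P\<in>tri K. (\<Sum>i\<le>m. c i * real (num_walks S i P)) = 0"
  shows "P \<in> tri K \<Longrightarrow> (\<Sum>i\<le>m. c i * real (num_walks S (n + i) P)) = 0"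
proof (induction n arbitrary: P)
  case 0 then show ?case using z by simp
next
  case (Suc n)
  have Pq: "P \<in> quarter_plane" using Suc.prems by (simp add: tri_def)
  have "(\<Sum>i\<le>m. c i * real (num_walks S (Suc n + i) P)) =
        (\<Sum>i\<le>m. c i * (\<Sum>s\<in>S. real (num_walks S (n + i) (psub P s))))"
    using Pq by (simp add: num_walks_Suc[OF S(1)])
  also have "\<dots> = (\<Sum>s\<in>S. \<Sum>i\<le>m. c i * real (num_walks S (n + i) (psub P s)))"
    by (simp add: sum_distrib_left sum.swap[of _ S])
  also have "\<dots> = 0"
  proof (rule sum.neutral, rule ballI)
    fix s assume s: "s \<in> S"
    show "(\<Sum>i\<le>m. c i * real (num_walks S (n + i) (psub P s))) = 0"
    proof (cases "psub P s \<in> quarter_plane")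
      case True
      then have "psub P s \<in> tri K" using Suc.prems S(2) s
        by (auto simp: tri_def psub_def)
      then show ?thesis by (rule Suc.IH)
    next
      case False
      then show ?thesis by (simp add: num_walks_notq)
    qed
  qed
  finally show ?case .
qed

lemma finite_support_poly:
  fixes G :: "'a::comm_ring_1 fps"
  assumes "\<And>n. n \<ge> d \<Longrightarrow> G $ n = 0"
  shows "\<exists>p. G = fps_of_poly p"
proof
  show "G = fps_of_poly (\<Sum>j<d. monom (G $ j) j)"
    using assms by (auto simp: fps_eq_iff coeff_sum coeff_monom not_less)
qed

lemma rational_gf:
  assumes S: "finite S" "\<forall>s\<in>S. fst s + snd s \<ge> 0" and Q: "Q \<in> quarter_plane"
  shows "\<exists>p q::complex poly. poly q 0 \<noteq> 0 \<and> fps_of_poly q * walk_gf S Q = fps_of_poly p"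
proof -
  define K where "K = fst Q + snd Q"
  have QT: "Q \<in> tri K" using Q by (simp add: tri_def K_def)
  define m where "m = card (tri K)"
  obtain c where cnz: "\<exists>i\<le>m. c i \<noteq> 0"
    and cz: "\<forall>P\<in>tri K. (\<Sum>i\<le>m. c i * real (num_walks S i P)) = 0"
    using finite_dependence[of "tri K" m "\<lambda>i P. real (num_walks S i P)"] finite_tri
    unfolding m_def by auto
  have g0: "(\<Sum>i\<le>m. c i * real (num_walks S (n + i) Q)) = 0" for n
    using rec_vanish[OF S cz QT] .
  define I where "I = {i. i \<le> m \<and> c i \<noteq> 0}"
  have I: "finite I" "I \<noteq> {}" using cnz unfolding I_def by auto
  define d where "d = Max I"
  have dI: "d \<in> I" unfolding d_def using I by (rule Max_in)
  have dm: "d \<le> m" and cd: "c d \<noteq> 0" using dI unfolding I_def by auto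
  have cbig: "c i = 0" if "i \<le> m" "i > d" for i
    using Max_ge[OF I(1), of i] that unfolding I_def d_def by fastforce
  define q :: "complex poly" where "q = (\<Sum>i\<le>d. monom (complex_of_real (c i)) (d - i))"
  have coeffq: "coeff q j = (if j \<le> d then complex_of_real (c (d - j)) else 0)" for j
  proof -
    have "coeff q j = (\<Sum>i\<le>d. if d - i = j then complex_of_real (c i) else 0)"
      unfolding q_def by (simp add: coeff_sum coeff_monom)
    also have "\<dots> = (\<Sum>i\<in>(if j \<le> d then {d - j} else {}). complex_of_real (c i))"
      by (rule sum.mono_neutral_cong_right) (auto split: if_splits)
    also have "\<dots> = (if j \<le> d then complex_of_real (c (d - j)) else 0)" by auto
    finally show ?thesis .
  qed
  have q0: "poly q 0 \<noteq> 0" using cd by (simp add: poly_0_coeff_0 coeffq)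
  have "\<exists>p. fps_of_poly q * walk_gf S Q = fps_of_poly p"
  proof (rule finite_support_poly[of d])
    fix n assume n: "n \<ge> d"
    have "(fps_of_poly q * walk_gf S Q) $ n =
          (\<Sum>j=0..n. coeff q j * of_nat (num_walks S (n - j) Q))"
      by (simp add: fps_mult_nth walk_gf_def)
    also have "\<dots> = (\<Sum>j\<le>d. complex_of_real (c (d - j)) * of_nat (num_walks S (n - j) Q))"
      by (rule sum.mono_neutral_cong_right) (use n in \<open>auto simp: coeffq\<close>)
    also have "\<dots> = (\<Sum>i\<le>d. complex_of_real (c i) * of_nat (num_walks S ((n - d) + i) Q))"
      by (rule sum.reindex_bij_witness[of _ "\<lambda>i. d - i" "\<lambda>i. d - i"]) (use n in auto)
    also have "\<dots> = (\<Sum>i\<le>m. complex_of_real (c i) * of_nat (num_walks S ((n - d) + i) Q))"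
      by (rule sum.mono_neutral_left) (use dm cbig in auto)
    also have "\<dots> = complex_of_real (\<Sum>i\<le>m. c i * real (num_walks S ((n - d) + i) Q))"
      by simp
    also have "\<dots> = 0" using g0 by simp
    finally show "(fps_of_poly q * walk_gf S Q) $ n = 0" .
  qed
  then show ?thesis using q0 by blast
qed



definition lam :: "nat \<Rightarrow> real" where "lam k = 2 * cos (pi / (2 + real k))"
definition vv :: "nat \<Rightarrow> int \<Rightarrow> real" where
  "vv k y = sin (pi * (real_of_int y + 1) / (2 + real k))"

lemma vv_m1: "vv k (-1) = 0" by (simp add: vv_def)
lemma vv_top: "vv k (int k + 1) = 0"
proof -
  have "pi * (real_of_int (int k + 1) + 1) / (2 + real k) = pi" by (simp add: field_simps)
  then show ?thesis by (simp add: vv_def)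
qed

lemma vv_rec: "vv k (y - 1) + vv k (y + 1) = lam k * vv k y"
proof -
  define a where "a = pi * (real_of_int y + 1) / (2 + real k)"
  define b where "b = pi / (2 + real k)"
  have 1: "pi * (real_of_int (y - 1) + 1) / (2 + real k) = a - b"
    unfolding a_def b_def by (simp add: diff_divide_distrib[symmetric] algebra_simps)
  have 2: "pi * (real_of_int (y + 1) + 1) / (2 + real k) = a + b"
    unfolding a_def b_def by (simp add: add_divide_distrib[symmetric] algebra_simps)
  have "sin (a - b) + sin (a + b) = 2 * cos b * sin a"
    by (simp add: sin_diff sin_add)
  then show ?thesis unfolding vv_def lam_def 1 2 a_def[symmetric] b_def[symmetric] .
qed

lemma vv_nonneg: assumes "-1 \<le> y" "y \<le> int k + 1" shows "vv k y \<ge> 0"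
proof -
  have p: "2 + real k > 0" by simp
  have a: "0 \<le> pi * (real_of_int y + 1) / (2 + real k)"
    using p assms by (intro divide_nonneg_pos mult_nonneg_nonneg) auto
  have "real_of_int y + 1 \<le> 2 + real k" using assms by linarith
  then have "pi * (real_of_int y + 1) \<le> pi * (2 + real k)" by simp
  then have b: "pi * (real_of_int y + 1) / (2 + real k) \<le> pi"
    using p by (simp add: divide_le_eq)
  show ?thesis unfolding vv_def using a b by (rule sin_ge_zero)
qed

lemma vv_le1: "vv k y \<le> 1" by (simp add: vv_def)

lemma sig_pos: "sin (pi / (2 + real k)) > 0"
proof (rule sin_gt_zero)
  show "0 < pi / (2 + real k)" by simp
  have "pi / (2 + real k) \<le> pi / 2" by (intro divide_left_mono) auto
  then show "pi / (2 + real k) < pi" using pi_gt_zero by linarith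
qed

lemma vv_ge: assumes "0 \<le> y" "y \<le> int k" shows "vv k y \<ge> sin (pi / (2 + real k))"
proof -
  define t where "t = pi * (real_of_int y + 1) / (2 + real k)"
  define b where "b = pi / (2 + real k)"
  have ty: "t = b * (real_of_int y + 1)" unfolding t_def b_def by simp
  have bpos: "b > 0" unfolding b_def by simp
  have "b * 1 \<le> b * (real_of_int y + 1)" using bpos assms by (intro mult_left_mono) auto
  then have tb: "t \<ge> b" unfolding ty by simp
  have pib: "pi = b * (2 + real k)" unfolding b_def by simp
  have "pi - t = b * (real k + 1 - real_of_int y)" unfolding ty pib by (simp add: algebra_simps)
  moreover have "b * 1 \<le> b * (real k + 1 - real_of_int y)" using bpos assms by (intro mult_left_mono) auto
  ultimately have ptb: "pi - t \<ge> b" by simp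
  show ?thesis
  proof (cases "t \<le> pi / 2")
    case True
    have "sin b \<le> sin t" by (rule sin_monotone_2pi_le) (use True tb bpos in auto)
    then show ?thesis unfolding vv_def t_def[symmetric] b_def[symmetric] .
  next
    case False
    have "sin b \<le> sin (pi - t)" by (rule sin_monotone_2pi_le) (use False ptb bpos in auto)
    then show ?thesis unfolding vv_def t_def[symmetric] b_def[symmetric] by simp
  qed
qed

lemma vv_0: "vv k 0 = sin (pi / (2 + real k))" by (simp add: vv_def)

lemma lam_ge1: assumes "k \<ge> 1" shows "lam k \<ge> 1"
proof -
  have "cos (pi / 3) \<le> cos (pi / (2 + real k))"
  proof (rule cos_monotone_0_pi_le)
    show "0 \<le> pi / (2 + real k)" by simp
    have "3 \<le> 2 + real k" using assms by simp
    then show "pi / (2 + real k) \<le> pi / 3" by (intro divide_left_mono) auto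
  qed simp
  then show ?thesis by (simp add: lam_def cos_60)
qed



lemma stepD_sub: "stepD \<subseteq> S \<Longrightarrow> (-1,1) \<in> S \<and> (1,-1) \<in> S \<and> (0,1) \<in> S"
  by (auto simp: stepD_def)

lemma nw_sub_ge:
  assumes "finite S" "A \<subseteq> S" "P \<in> quarter_plane"
  shows "(\<Sum>s\<in>A. real (num_walks S n (psub P s))) \<le> real (num_walks S (Suc n) P)"
proof -
  have "(\<Sum>s\<in>A. real (num_walks S n (psub P s))) \<le> (\<Sum>s\<in>S. real (num_walks S n (psub P s)))"
    by (rule sum_mono2) (use assms in auto)
  also have "\<dots> = real (num_walks S (Suc n) P)"
    using assms by (simp add: num_walks_Suc)
  finally show ?thesis .
qed

lemma E1:
  assumes "finite S" "stepD \<subseteq> S" "(x,y) \<in> quarter_plane"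
  shows "real (num_walks S n (x+1,y-1)) + real (num_walks S n (x-1,y+1)) \<le> real (num_walks S (Suc n) (x,y))"
  using nw_sub_ge[OF assms(1) _ assms(3), of "{(-1,1),(1,-1)}" n] stepD_sub[OF assms(2)]
  by (simp add: psub_def)

lemma E2:
  assumes "finite S" "stepD \<subseteq> S" "(x,y) \<in> quarter_plane"
  shows "real (num_walks S n (x,y-1)) \<le> real (num_walks S (Suc n) (x,y))"
  using nw_sub_ge[OF assms(1) _ assms(3), of "{(0,1)}" n] stepD_sub[OF assms(2)]
  by (simp add: psub_def)

lemma E3:
  assumes "finite S" "stepD \<subseteq> S"
  shows "real (num_walks S j (0, int j)) \<ge> 1"
proof (induction j)
  case 0 then show ?case by (simp add: num_walks_0)
next
  case (Suc j)
  have "real (num_walks S j (0, int (Suc j) - 1)) \<le> real (num_walks S (Suc j) (0, int (Suc j)))"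
    by (rule E2[OF assms]) (simp add: quarter_plane_def)
  then show ?case using Suc by simp
qed

lemma E4:
  assumes "finite S" "stepD \<subseteq> S" "d \<le> k"
  shows "real (num_walks S (k + d) (int d, int k - int d)) \<ge> 1"
  using assms(3)
proof (induction d)
  case 0 then show ?case using E3[OF assms(1,2), of k] by simp
next
  case (Suc d)
  have "real (num_walks S (k + d) (int (Suc d) + 1, int k - int (Suc d) - 1)) +
        real (num_walks S (k + d) (int (Suc d) - 1, int k - int (Suc d) + 1))
        \<le> real (num_walks S (Suc (k + d)) (int (Suc d), int k - int (Suc d)))"
    by (rule E1[OF assms(1,2)]) (use Suc.prems in \<open>simp add: quarter_plane_def\<close>)
  moreover have "real (num_walks S (k + d) (int (Suc d) - 1, int k - int (Suc d) + 1)) \<ge> 1"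
    using Suc by simp
  ultimately show ?case by simp
qed

definition UU :: "(int \<times> int) set \<Rightarrow> nat \<Rightarrow> nat \<Rightarrow> int \<Rightarrow> real" where
  "UU S k n y = (\<Sum>d\<le>k. real (num_walks S (n + d) (int k - y, y)))"

lemma UU_nonneg: "UU S k n y \<ge> 0" unfolding UU_def by (simp add: sum_nonneg)

lemma UU_out: "y < 0 \<or> y > int k \<Longrightarrow> UU S k n y = 0"
  unfolding UU_def by (auto simp: num_walks_notq quarter_plane_def)

lemma E5:
  assumes "finite S" "stepD \<subseteq> S" "0 \<le> y" "y \<le> int k"
  shows "UU S k (k + t) y \<ge> lam k ^ t * vv k y"
  using assms(3,4)
proof (induction t arbitrary: y)
  case 0
  define d where "d = nat (int k - y)"
  have dk: "d \<le> k" and dy: "int d = int k - y" using 0 unfolding d_def by auto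
  have "1 \<le> real (num_walks S (k + d) (int d, int k - int d))" by (rule E4[OF assms(1,2) dk])
  also have "\<dots> = real (num_walks S (k + d) (int k - y, y))" using dy by simp
  also have "\<dots> \<le> UU S k k y" unfolding UU_def
    by (rule member_le_sum) (use dk in auto)
  finally show ?case using vv_le1[of k y] by simp
next
  case (Suc t)
  have lo: "UU S k (k + t) z \<ge> lam k ^ t * vv k z" if "-1 \<le> z" "z \<le> int k + 1" for z
  proof (cases "0 \<le> z \<and> z \<le> int k")
    case True then show ?thesis using Suc.IH by blast
  next
    case False
    then have "z = -1 \<or> z = int k + 1" using that by auto
    then show ?thesis using UU_out[of z k S "k+t"] by (auto simp: vv_m1 vv_top)
  qed
  have "UU S k (k + t) (y - 1) + UU S k (k + t) (y + 1) \<le> UU S k (k + Suc t) y"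
  proof -
    have "UU S k (k + t) (y - 1) + UU S k (k + t) (y + 1) =
      (\<Sum>d\<le>k. real (num_walks S (k + t + d) (int k - y + 1, y - 1)) +
               real (num_walks S (k + t + d) (int k - y - 1, y + 1)))"
      unfolding UU_def sum.distrib by (simp add: algebra_simps)
    also have "\<dots> \<le> (\<Sum>d\<le>k. real (num_walks S (Suc (k + t + d)) (int k - y, y)))"
      by (rule sum_mono, rule E1[OF assms(1,2)]) (use Suc.prems in \<open>simp add: quarter_plane_def\<close>)
    also have "\<dots> = UU S k (k + Suc t) y" unfolding UU_def by simp
    finally show ?thesis .
  qed
  moreover have "lam k ^ t * vv k (y - 1) + lam k ^ t * vv k (y + 1) = lam k ^ Suc t * vv k y"
    using vv_rec[of k y] by (simp add: algebra_simps flip: distrib_left)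
  moreover have "UU S k (k + t) (y - 1) \<ge> lam k ^ t * vv k (y - 1)" by (rule lo) (use Suc.prems in auto)
  moreover have "UU S k (k + t) (y + 1) \<ge> lam k ^ t * vv k (y + 1)" by (rule lo) (use Suc.prems in auto)
  ultimately show ?case by linarith
qed



lemma sum_stepC: "(\<Sum>s\<in>stepC. f s) = f (-1,1) + f (0,1) + f (1,1) + f (1,0) + f (1,-1)"
  by (simp add: stepC_def add.assoc)

lemma psi_step:
  fixes M L :: real and x y :: int and k :: nat
  defines "\<psi>0 \<equiv> \<lambda>P. if P \<in> quarter_plane then M powr real_of_int (fst P + snd P) * vv k (snd P) else 0"
  assumes M: "M \<ge> 1" and hML: "3 / M \<le> (L - lam k) * sin (pi / (2 + real k))"
    and P: "(x,y) \<in> quarter_plane" "x + y \<le> int k"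
  shows "(\<Sum>s\<in>stepC. \<psi>0 (psub (x,y) s)) \<le> L * (M powr real_of_int (x + y) * vv k y)"
proof -
  define j where "j = real_of_int (x + y)"
  have x0: "x \<ge> 0" and y0: "y \<ge> 0" using P by (auto simp: quarter_plane_def)
  have yk: "y \<le> int k" using P x0 by linarith
  have Mp: "M > 0" using M by simp
  have vy: "vv k y \<ge> sin (pi / (2 + real k))" using vv_ge[OF y0 yk] .
  have t1: "\<psi>0 (x+1, y-1) \<le> M powr j * vv k (y - 1)"
    using vv_nonneg[of "y-1" k] y0 yk by (auto simp: \<psi>0_def j_def)
  have t2: "\<psi>0 (x-1, y+1) \<le> M powr j * vv k (y + 1)"
    using vv_nonneg[of "y+1" k] y0 yk by (auto simp: \<psi>0_def j_def)
  have pj1: "M powr (j - 1) = M powr j / M" using Mp by (simp add: powr_diff)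
  have low: "\<psi>0 P' \<le> M powr (j - 1)" if "fst P' + snd P' \<le> x + y - 1" for P'
  proof (cases "P' \<in> quarter_plane")
    case True
    have "M powr real_of_int (fst P' + snd P') \<le> M powr (j - 1)"
      using that M unfolding j_def by (intro powr_mono) auto
    moreover have "vv k (snd P') \<le> 1" by (rule vv_le1)
    moreover have "vv k (snd P') \<ge> 0" using True vv_nonneg[of "snd P'" k] that x0 P
      by (auto simp: quarter_plane_def)
    ultimately have "M powr real_of_int (fst P' + snd P') * vv k (snd P') \<le> M powr (j - 1) * 1"
      by (intro mult_mono) auto
    then show ?thesis using True by (simp add: \<psi>0_def)
  qed (simp add: \<psi>0_def)
  have t3: "\<psi>0 (x, y-1) \<le> M powr (j - 1)" by (rule low) simp
  have t4: "\<psi>0 (x-1, y) \<le> M powr (j - 1)" by (rule low) simp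
  have t5: "\<psi>0 (x-1, y-1) \<le> M powr (j - 1)" by (rule low) simp
  have "(\<Sum>s\<in>stepC. \<psi>0 (psub (x,y) s)) =
        \<psi>0 (x+1, y-1) + \<psi>0 (x, y-1) + \<psi>0 (x-1, y-1) + \<psi>0 (x-1, y) + \<psi>0 (x-1, y+1)"
    by (simp add: sum_stepC psub_def)
  also have "\<dots> \<le> M powr j * (vv k (y - 1) + vv k (y + 1)) + 3 * (M powr j / M)"
    using t1 t2 t3 t4 t5 pj1 by (simp add: algebra_simps)
  also have "\<dots> = M powr j * (lam k * vv k y) + M powr j * (3 / M)"
    by (simp add: vv_rec)
  also have "\<dots> \<le> M powr j * (lam k * vv k y) + M powr j * ((L - lam k) * vv k y)"
  proof -
    have "(L - lam k) * sin (pi / (2 + real k)) \<le> (L - lam k) * vv k y"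
    proof (cases "L - lam k \<ge> 0")
      case True then show ?thesis using vy by (intro mult_left_mono) auto
    next
      case False
      then have "(L - lam k) * sin (pi / (2 + real k)) < 0"
        using sig_pos[of k] by (simp add: mult_neg_pos)
      moreover have "3 / M > 0" using Mp by simp
      ultimately show ?thesis using hML by linarith
    qed
    then have "3 / M \<le> (L - lam k) * vv k y" using hML by linarith
    then show ?thesis by (intro add_left_mono mult_left_mono) auto
  qed
  also have "\<dots> = L * (M powr real_of_int (x + y) * vv k y)"
    unfolding j_def by (simp add: algebra_simps)
  finally show ?thesis .
qed

lemma lam_nonneg: "lam k \<ge> 0"
proof -
  have "pi / (2 + real k) \<le> pi / 2" by (intro divide_left_mono) auto
  moreover have "0 \<le> pi / (2 + real k)" by simp
  moreover have "-(pi/2) \<le> pi / (2 + real k)" using \<open>0 \<le> pi / (2 + real k)\<close> pi_gt_zero by linarith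
  ultimately have "cos (pi / (2 + real k)) \<ge> 0" by (intro cos_ge_zero) auto
  then show ?thesis by (simp add: lam_def)
qed

lemma F1:
  assumes S: "S \<subseteq> stepC" and L: "lam k < L"
  shows "\<exists>C. \<forall>n. \<forall>P\<in>quarter_plane. fst P + snd P \<le> int k \<longrightarrow> real (num_walks S n P) \<le> C * L ^ n"
proof -
  define \<sigma> where "\<sigma> = sin (pi / (2 + real k))"
  have \<sigma>: "\<sigma> > 0" unfolding \<sigma>_def by (rule sig_pos)
  have Lp: "L - lam k > 0" using L by simp
  define M where "M = max 1 (3 / ((L - lam k) * \<sigma>))"
  have M1: "M \<ge> 1" unfolding M_def by simp
  have "3 / ((L - lam k) * \<sigma>) \<le> M" unfolding M_def by simp
  then have "3 \<le> M * ((L - lam k) * \<sigma>)" using Lp \<sigma> by (simp add: divide_le_eq)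
  then have "3 / M \<le> (M * ((L - lam k) * \<sigma>)) / M" using M1 by (intro divide_right_mono) auto
  then have hML: "3 / M \<le> (L - lam k) * \<sigma>" using M1 by simp
  have fin: "finite S" using S by (rule finite_subset) (simp add: stepC_def)
  have Sn: "\<forall>s\<in>S. fst s + snd s \<ge> 0" using S by (auto simp: stepC_def)
  define \<psi> where "\<psi> P = M powr real_of_int (fst P + snd P) * vv k (snd P)" for P :: "int \<times> int"
  have main: "\<forall>P\<in>quarter_plane. fst P + snd P \<le> int k \<longrightarrow>
      real (num_walks S n P) \<le> L ^ n * \<psi> P / \<sigma>" for n
  proof (induction n)
    case 0
    show ?case
    proof (intro ballI impI)
      fix P :: "int \<times> int" assume P: "P \<in> quarter_plane" "fst P + snd P \<le> int k"
      have "\<psi> P \<ge> 0" unfolding \<psi>_def using P vv_nonneg[of "snd P" k]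
        by (auto simp: quarter_plane_def)
      show "real (num_walks S 0 P) \<le> L ^ 0 * \<psi> P / \<sigma>"
      proof (cases "P = (0,0)")
        case True
        have "\<psi> P = \<sigma>" unfolding \<psi>_def \<sigma>_def True using M1 by (simp add: vv_0)
        then show ?thesis using True \<sigma> by (simp add: num_walks_0)
      next
        case False
        then show ?thesis using \<open>\<psi> P \<ge> 0\<close> \<sigma> by (simp add: num_walks_0)
      qed
    qed
  next
    case (Suc n)
    show ?case
    proof (intro ballI impI)
      fix P :: "int \<times> int" assume P: "P \<in> quarter_plane" "fst P + snd P \<le> int k"
      obtain x y where xy: "P = (x,y)" by (cases P)
      define \<psi>0 where "\<psi>0 = (\<lambda>P. if P \<in> quarter_plane then M powr real_of_int (fst P + snd P) * vv k (snd P) else 0)"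
      have each: "real (num_walks S n (psub P s)) \<le> L ^ n / \<sigma> * \<psi>0 (psub P s)" if s: "s \<in> stepC" for s
      proof (cases "psub P s \<in> quarter_plane")
        case True
        have "fst (psub P s) + snd (psub P s) \<le> int k"
          using s P by (auto simp: stepC_def psub_def)
        then have "real (num_walks S n (psub P s)) \<le> L ^ n * \<psi> (psub P s) / \<sigma>"
          using Suc.IH True by blast
        then show ?thesis using True by (simp add: \<psi>0_def \<psi>_def)
      next
        case False then show ?thesis by (simp add: num_walks_notq \<psi>0_def)
      qed
      have "real (num_walks S (Suc n) P) = (\<Sum>s\<in>S. real (num_walks S n (psub P s)))"
        using P by (simp add: num_walks_Suc[OF fin])
      also have "\<dots> \<le> (\<Sum>s\<in>stepC. real (num_walks S n (psub P s)))"
        by (rule sum_mono2) (use S in \<open>auto simp: stepC_def\<close>)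
      also have "\<dots> \<le> (\<Sum>s\<in>stepC. L ^ n / \<sigma> * \<psi>0 (psub P s))"
        by (rule sum_mono) (rule each)
      also have "\<dots> = L ^ n / \<sigma> * (\<Sum>s\<in>stepC. \<psi>0 (psub (x,y) s))"
        by (simp add: sum_distrib_left xy)
      also have "\<dots> \<le> L ^ n / \<sigma> * (L * (M powr real_of_int (x + y) * vv k y))"
      proof (rule mult_left_mono)
        show "(\<Sum>s\<in>stepC. \<psi>0 (psub (x,y) s)) \<le> L * (M powr real_of_int (x + y) * vv k y)"
          unfolding \<psi>0_def by (rule psi_step[OF M1 hML[unfolded \<sigma>_def]]) (use P xy in auto)
        have "L > 0" using L lam_nonneg[of k] by simp
        then show "0 \<le> L ^ n / \<sigma>" using \<sigma> by simp
      qed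
      also have "\<dots> = L ^ Suc n * \<psi> P / \<sigma>" by (simp add: xy \<psi>_def)
      finally show "real (num_walks S (Suc n) P) \<le> L ^ Suc n * \<psi> P / \<sigma>" .
    qed
  qed
  have Lpos: "L > 0" using L lam_nonneg[of k] by simp
  show ?thesis
  proof (intro exI allI ballI impI)
    fix n and P :: "int \<times> int" assume P: "P \<in> quarter_plane" "fst P + snd P \<le> int k"
    have "\<psi> P \<le> M powr real k * 1" unfolding \<psi>_def
    proof (rule mult_mono)
      show "M powr real_of_int (fst P + snd P) \<le> M powr real k" using P M1 by (intro powr_mono) auto
    qed (use P vv_nonneg[of "snd P" k] in \<open>auto simp: vv_le1 quarter_plane_def\<close>)
    then have "L ^ n * \<psi> P / \<sigma> \<le> L ^ n * (M powr real k) / \<sigma>"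
      using \<sigma> Lpos by (intro divide_right_mono mult_left_mono) auto
    then show "real (num_walks S n P) \<le> (M powr real k / \<sigma>) * L ^ n"
    proof -
      have "real (num_walks S n P) \<le> L ^ n * \<psi> P / \<sigma>" using main[of n] P by blast
      also have "\<dots> \<le> L ^ n * (M powr real k) / \<sigma>" by fact
      also have "\<dots> = (M powr real k / \<sigma>) * L ^ n" by simp
      finally show ?thesis .
    qed
  qed
qed



lemma sum_split_block:
  fixes f :: "nat \<Rightarrow> real"
  shows "(\<Sum>n<m + c. f n) = (\<Sum>n<m. f n) + (\<Sum>d<c. f (m + d))"
  by (induction c) (simp_all add: add.assoc)

lemma main_gen:
  fixes S :: "(int \<times> int) set" and k i :: nat
  assumes SD: "stepD \<subseteq> S" and SC: "S \<subseteq> stepC" and k: "k \<ge> 1" and ik: "i \<le> k"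
  defines "Q \<equiv> (int k - int i, int i)"
  shows "\<exists>p q :: complex poly. q \<noteq> 0 \<and> coprime p q \<and>
           fps_of_poly q * walk_gf S Q = fps_of_poly p \<and>
           poly q (complex_of_real (1 / lam k)) = 0 \<and>
           (\<forall>z. poly q z = 0 \<longrightarrow> 1 / lam k \<le> cmod z)"
proof -
  have fin: "finite S" using SC by (rule finite_subset) (simp add: stepC_def)
  have Sn: "\<forall>s\<in>S. fst s + snd s \<ge> 0" using SC by (auto simp: stepC_def)
  have Qq: "Q \<in> quarter_plane" using ik by (simp add: Q_def quarter_plane_def)
  have Qk: "fst Q + snd Q \<le> int k" by (simp add: Q_def)
  define F where "F = walk_gf S Q"
  define a where "a n = real (num_walks S n Q)" for n
  have Fn: "F $ n = complex_of_real (a n)" for n by (simp add: F_def walk_gf_def a_def)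
  have a0: "a n \<ge> 0" for n by (simp add: a_def)
  define lm where "lm = lam k"
  have l1: "lm \<ge> 1" unfolding lm_def by (rule lam_ge1[OF k])
  define \<rho> where "\<rho> = 1 / lm"
  have \<rho>0: "\<rho> > 0" and \<rho>1: "\<rho> \<le> 1" and rholm: "\<rho> * lm = 1" using l1 by (auto simp: \<rho>_def)
  obtain p0 q0 :: "complex poly" where q00: "poly q0 0 \<noteq> 0"
    and pq0: "fps_of_poly q0 * F = fps_of_poly p0"
    using rational_gf[OF fin Sn Qq] unfolding F_def by blast
  have q0nz: "q0 \<noteq> 0" using q00 by auto
  define g where "g = gcd p0 q0"
  have gnz: "g \<noteq> 0" using q0nz by (simp add: g_def)
  define p where "p = p0 div g"
  define q where "q = q0 div g"
  have cop: "coprime p q" unfolding p_def q_def g_def by (rule div_gcd_coprime) (use q0nz in auto)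
  have p0e: "p0 = p * g" unfolding p_def g_def by simp
  have q0e: "q0 = q * g" unfolding q_def g_def by simp
  have qnz: "q \<noteq> 0" using q0nz q0e by auto
  have "fps_of_poly g * (fps_of_poly q * F) = fps_of_poly g * fps_of_poly p"
    using pq0 unfolding p0e q0e fps_of_poly_mult by (simp add: algebra_simps)
  moreover have "fps_of_poly g \<noteq> 0" using gnz by (simp add: fps_of_poly_eq_iff[of g 0, simplified])
  ultimately have pq: "fps_of_poly q * F = fps_of_poly p" by simp
  have summ: "summable (\<lambda>n. F $ n * z ^ n)" if z: "norm z < \<rho>" for z :: complex
  proof -
    define r where "r = norm z"
    have r0: "r \<ge> 0" unfolding r_def by simp
    define L where "L = (lm + (if r = 0 then lm + 1 else 1 / r)) / 2"
    have lL: "lm < L"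
    proof (cases "r = 0")
      case False
      then have "r > 0" using r0 by simp
      then have "1 / r > 1 / \<rho>" using z unfolding r_def by (intro divide_strict_left_mono) (auto simp: \<rho>0)
      then show ?thesis using False unfolding L_def \<rho>_def by simp
    qed (simp add: L_def)
    have rL: "r * L < 1"
    proof (cases "r = 0")
      case False
      then have rp: "r > 0" using r0 by simp
      have "1 / r > lm" using z rp unfolding r_def \<rho>_def using l1
        by (simp add: field_simps)
      then have "L < 1 / r" unfolding L_def using False by simp
      then show ?thesis using rp by (simp add: field_simps)
    qed simp
    have Lp: "L > 0" using lL l1 by simp
    obtain C where C: "\<forall>n. \<forall>P\<in>quarter_plane. fst P + snd P \<le> int k \<longrightarrow> real (num_walks S n P) \<le> C * L ^ n"
      using F1[OF SC lL[unfolded lm_def]] by blast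
    have bound: "norm (F $ n * z ^ n) \<le> C * (r * L) ^ n" for n
    proof -
      have "norm (F $ n * z ^ n) = a n * r ^ n" using a0[of n] by (simp add: Fn norm_mult norm_power r_def)
      also have "\<dots> \<le> C * L ^ n * r ^ n" using C Qq Qk r0 by (intro mult_right_mono) (auto simp: a_def)
      also have "\<dots> = C * (r * L) ^ n" by (simp add: power_mult_distrib)
      finally show ?thesis .
    qed
    show ?thesis
    proof (rule summable_comparison_test')
      show "summable (\<lambda>n. C * (r * L) ^ n)"
        using rL r0 Lp by (intro summable_mult summable_geometric) auto
      show "norm (F $ n * z ^ n) \<le> C * (r * L) ^ n" if "n \<ge> 0" for n by (rule bound)
    qed
  qed
  have rad: "fps_conv_radius F \<ge> ereal \<rho>"
    unfolding fps_conv_radius_def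
    by (rule conv_radius_geI_ex') (rule summ, simp)
  have inrad: "ereal (norm z) < fps_conv_radius F" if "norm z < \<rho>" for z :: complex
    by (rule less_le_trans[OF _ rad]) (use that in simp)
  have evalF: "poly q z * eval_fps F z = poly p z" if "norm z < \<rho>" for z
  proof -
    have "eval_fps (fps_of_poly q * F) z = eval_fps (fps_of_poly q) z * eval_fps F z"
      by (rule eval_fps_mult) (use inrad[OF that] in auto)
    then show ?thesis using pq by simp
  qed
  have roots: "\<rho> \<le> cmod z" if "poly q z = 0" for z
  proof (rule ccontr)
    assume "\<not> \<rho> \<le> cmod z"
    then have "poly p z = 0" using evalF[of z] that by simp
    then have "[:-z, 1:] dvd p" "[:-z, 1:] dvd q" using that by (simp_all add: poly_eq_0_iff_dvd)
    then have "is_unit [:-z, 1:]" using cop coprime_common_divisor by blast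
    then show False by (simp add: is_unit_iff_degree)
  qed
  have blk: "(\<Sum>d\<le>k. a (k + t + d) * \<rho> ^ (k + t + d)) \<ge> \<rho> ^ (2 * k) * sin (pi / (2 + real k))" for t
  proof -
    have "(\<Sum>d\<le>k. a (k + t + d) * \<rho> ^ (k + t + d)) \<ge> (\<Sum>d\<le>k. a (k + t + d) * \<rho> ^ (2 * k + t))"
      by (intro sum_mono mult_left_mono power_decreasing) (use \<rho>0 \<rho>1 a0 in auto)
    moreover have "(\<Sum>d\<le>k. a (k + t + d) * \<rho> ^ (2 * k + t)) = UU S k (k + t) (int i) * \<rho> ^ (2 * k + t)"
      by (simp add: UU_def a_def Q_def sum_distrib_right)
    moreover have "UU S k (k + t) (int i) \<ge> lm ^ t * sin (pi / (2 + real k))"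
    proof -
      have "UU S k (k + t) (int i) \<ge> lam k ^ t * vv k (int i)" by (rule E5[OF fin SD]) (use ik in auto)
      moreover have "vv k (int i) \<ge> sin (pi / (2 + real k))" by (rule vv_ge) (use ik in auto)
      ultimately show ?thesis unfolding lm_def using l1[unfolded lm_def]
        by (smt (verit) mult_left_mono zero_le_power)
    qed
    ultimately have "(\<Sum>d\<le>k. a (k + t + d) * \<rho> ^ (k + t + d)) \<ge> lm ^ t * sin (pi / (2 + real k)) * \<rho> ^ (2 * k + t)"
      using \<rho>0 by (smt (verit) mult_right_mono zero_le_power)
    also have "lm ^ t * sin (pi / (2 + real k)) * \<rho> ^ (2 * k + t) = \<rho> ^ (2 * k) * sin (pi / (2 + real k)) * (\<rho> * lm) ^ t"
      by (simp add: power_add power_mult_distrib algebra_simps)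
    finally show ?thesis using rholm by simp
  qed
  define \<epsilon> where "\<epsilon> = \<rho> ^ (2 * k) * sin (pi / (2 + real k))"
  have \<epsilon>0: "\<epsilon> > 0" unfolding \<epsilon>_def using \<rho>0 sig_pos by simp
  have grow: "(\<Sum>n<k + (k + 1) * J. a n * \<rho> ^ n) \<ge> real J * \<epsilon>" for J
  proof (induction J)
    case 0 then show ?case using a0 \<rho>0 by (simp add: sum_nonneg)
  next
    case (Suc J)
    have e: "k + (k + 1) * Suc J = (k + (k + 1) * J) + (k + 1)" by simp
    have b: "(\<Sum>d<k + 1. a (k + (k + 1) * J + d) * \<rho> ^ (k + (k + 1) * J + d)) \<ge> \<epsilon>"
      using blk[of "(k + 1) * J"] unfolding \<epsilon>_def by (simp add: lessThan_Suc_atMost add.assoc)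
    have "(\<Sum>n<k + (k + 1) * Suc J. a n * \<rho> ^ n) =
      (\<Sum>n<k + (k + 1) * J. a n * \<rho> ^ n) + (\<Sum>d<k + 1. a (k + (k + 1) * J + d) * \<rho> ^ (k + (k + 1) * J + d))"
      unfolding e by (rule sum_split_block)
    then show ?case using Suc b by (simp add: algebra_simps)
  qed
  have pole: "poly q (complex_of_real \<rho>) = 0"
  proof (rule ccontr)
    assume qr: "poly q (complex_of_real \<rho>) \<noteq> 0"
    define B where "B = Re (poly p (complex_of_real \<rho>) / poly q (complex_of_real \<rho>))"
    have bnd: "(\<Sum>n<N. a n * \<rho> ^ n) \<le> B" for N
    proof -
      have lim1: "((\<lambda>x. \<Sum>n<N. a n * x ^ n) \<longlongrightarrow> (\<Sum>n<N. a n * \<rho> ^ n)) (at_left \<rho>)"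
        by (intro tendsto_intros)
      have "continuous (at \<rho>) (\<lambda>x. Re (poly p (complex_of_real x) / poly q (complex_of_real x)))"
        using qr by (intro bounded_linear.continuous[OF bounded_linear_Re] continuous_intros) auto
      then have lim2: "((\<lambda>x. Re (poly p (complex_of_real x) / poly q (complex_of_real x))) \<longlongrightarrow> B) (at_left \<rho>)"
        unfolding B_def isCont_def by (rule filterlim_mono) (auto simp: at_le)
      have ev: "eventually (\<lambda>x. (\<Sum>n<N. a n * x ^ n) \<le> Re (poly p (complex_of_real x) / poly q (complex_of_real x))) (at_left \<rho>)"
        using eventually_at_left_real[OF \<rho>0]
      proof (rule eventually_mono)
        fix x assume x: "x \<in> {0<..<\<rho>}"
        have nx: "norm (complex_of_real x) < \<rho>" using x by simp
        have qx: "poly q (complex_of_real x) \<noteq> 0" using roots[of "complex_of_real x"] nx by auto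
        have ev: "eval_fps F (complex_of_real x) = poly p (complex_of_real x) / poly q (complex_of_real x)"
          using evalF[OF nx] qx by (simp add: field_simps)
        have "(\<lambda>n. F $ n * complex_of_real x ^ n) sums eval_fps F (complex_of_real x)"
          by (rule sums_eval_fps) (rule inrad[OF nx])
        then have "(\<lambda>n. Re (F $ n * complex_of_real x ^ n)) sums Re (eval_fps F (complex_of_real x))"
          by (rule sums_Re)
        then have s: "(\<lambda>n. a n * x ^ n) sums Re (eval_fps F (complex_of_real x))"
          by (simp add: Fn flip: of_real_power)
        have "(\<Sum>n<N. a n * x ^ n) \<le> suminf (\<lambda>n. a n * x ^ n)"
          by (rule sum_le_suminf) (use s x a0 in \<open>auto simp: sums_iff\<close>)
        also have "\<dots> = Re (eval_fps F (complex_of_real x))" using s by (simp add: sums_iff)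
        finally show "(\<Sum>n<N. a n * x ^ n) \<le> Re (poly p (complex_of_real x) / poly q (complex_of_real x))"
          using ev by simp
      qed
      show ?thesis by (rule tendsto_le[OF _ lim2 lim1 ev]) simp
    qed
    obtain J :: nat where J: "real J > B / \<epsilon>" using reals_Archimedean2 by blast
    then have "real J * \<epsilon> > B" using \<epsilon>0 by (simp add: field_simps)
    then show False using grow[of J] bnd[of "k + (k + 1) * J"] by simp
  qed
  show ?thesis
    using qnz cop pq pole roots unfolding F_def \<rho>_def lm_def by blast
qed


theorem lemma2p9:
  fixes S :: "(int \<times> int) set" and k :: nat and Q :: "int \<times> int"
  assumes "S \<in> {stepB, stepC, stepD, stepE}"
    and "k \<ge> 1"
    and "Q \<in> antidiag k"
  shows "\<exists>p q :: complex poly. q \<noteq> 0 \<and> coprime p q \<and>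
           fps_of_poly q * walk_gf S Q = fps_of_poly p \<and>
           poly q (complex_of_real (1 / (2 * cos (pi / (2 + real k))))) = 0 \<and>
           (\<forall>z. poly q z = 0 \<longrightarrow> 1 / (2 * cos (pi / (2 + real k))) \<le> cmod z)"
proof -
  have SD: "stepD \<subseteq> S" and SC: "S \<subseteq> stepC"
    using assms(1) by (auto simp: stepB_def stepC_def stepD_def stepE_def)
  obtain i where ik: "i \<le> k" and Qi: "Q = (int k - int i, int i)"
    using assms(3) unfolding antidiag_def by blast
  show ?thesis using main_gen[OF SD SC assms(2) ik] unfolding Qi lam_def .
qed

end
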